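(* Let $p\in\mathbb{N}$ and $\eta\in N_p$. Then the radical of the ideal $I(\eta)\subseteq S$ generated by $\{\langle\eta,\delta\rangle:\ \delta\in\mathrm{Der}(-\log\mathscr{X})\}$ contains the irrelevant maximal ideal $S_+=\bigoplus_{q>0}S_q$.
   Context: $V=\mathbb{C}^\ell$, $S=\mathbb{C}[x_1,\dots,x_\ell]$. $\mathscr{X}=\{\mathscr{X}_1,\dots,\mathscr{X}_s\}$ is a central equidimensional subspace arrangement (finite set of linear subspaces of equal codimension) with radical ideal $\mathcal{I}_\mathscr{X}$. Its intersection lattice is $L(\mathscr{X})=\{\bigcap_{i\in I}\mathscr{X}_i: I\subseteq\{1,\dots,s\}\}$ (the empty intersection being $V$). $\Omega^1_p$ denotes the space of $1$-forms $\sum a_i dx_i$ with all $a_i$ homogeneous polynomials of degree $p$; for a linear subspace $X$ of $V$, $r_{V,X}(\eta)$ denotes the restriction (pullback) of $\eta$ to $X$, a $1$-form on $X$ with coefficients homogeneous of degree $p$. $N_p$ is the set of $\eta\in\Omega^1_p$ such that for every $X\in L(\mathscr{X})$ with $\dim X>0$ (including $X=V$), $r_{V,X}(\eta)$ vanishes only at the origin of $X$. $\mathrm{Der}(-\log\mathscr{X})=\{\delta$ polynomial vector field on $V$ : $\delta(\mathcal{I}_\mathscr{X})\subseteq\mathcal{I}_\mathscr{X}\}$, and $\langle\eta,\delta\rangle$ is the contraction. *)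

theory Defs
  imports "HOL-Analysis.Analysis" "HOL-Library.Poly_Mapping"
begin

text \<open>Polynomial ring S = C[x_i : i in 'n] (for a finite index type 'n, |'n| = l),
  represented as finitely supported maps from exponent vectors to coefficients.
  V = complex^'n.\<close>

type_synonym 'n mpoly = "('n \<Rightarrow>\<^sub>0 nat) \<Rightarrow>\<^sub>0 complex"

definition mdeg :: "('n::finite \<Rightarrow>\<^sub>0 nat) \<Rightarrow> nat" where
  "mdeg m = (\<Sum>i\<in>UNIV. Poly_Mapping.lookup m i)"

definition homogeneous :: "nat \<Rightarrow> 'n::finite mpoly \<Rightarrow> bool" where
  "homogeneous q f \<longleftrightarrow> (\<forall>m\<in>Poly_Mapping.keys f. mdeg m = q)"

definition eval :: "'n::finite mpoly \<Rightarrow> complex^'n \<Rightarrow> complex" where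
  "eval f x = (\<Sum>m\<in>Poly_Mapping.keys f. Poly_Mapping.lookup f m * (\<Prod>i\<in>UNIV. (x $ i) ^ Poly_Mapping.lookup m i))"

definition pder :: "'n \<Rightarrow> 'n::finite mpoly \<Rightarrow> 'n mpoly" where
  "pder i f = (\<Sum>m\<in>Poly_Mapping.keys f. Poly_Mapping.single (m - Poly_Mapping.single i 1)
                              (Poly_Mapping.lookup f m * of_nat (Poly_Mapping.lookup m i)))"

definition apply_vf :: "('n \<Rightarrow> 'n mpoly) \<Rightarrow> 'n::finite mpoly \<Rightarrow> 'n mpoly" where
  "apply_vf \<delta> f = (\<Sum>i\<in>UNIV. \<delta> i * pder i f)"

text \<open>Polynomial 1-forms eta = sum_i eta_i dx_i; contraction with a vector field.\<close>
definition contract :: "('n \<Rightarrow> 'n mpoly) \<Rightarrow> ('n \<Rightarrow> 'n mpoly) \<Rightarrow> 'n::finite mpoly" where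
  "contract \<eta> \<delta> = (\<Sum>i\<in>UNIV. \<eta> i * \<delta> i)"

definition ideal_gen :: "'n::finite mpoly set \<Rightarrow> 'n mpoly set" where
  "ideal_gen G = {f. \<exists>F c. finite F \<and> F \<subseteq> G \<and> f = (\<Sum>g\<in>F. c g * g)}"

definition radical :: "'n::finite mpoly set \<Rightarrow> 'n mpoly set" where
  "radical I = {f. \<exists>k. f ^ k \<in> I}"

definition irrelevant_ideal :: "'n::finite mpoly set" where
  "irrelevant_ideal = {f. Poly_Mapping.lookup f 0 = 0}"

definition arr_ideal :: "(complex^'n) set set \<Rightarrow> 'n::finite mpoly set" where
  "arr_ideal Xs = {f. \<forall>X\<in>Xs. \<forall>x\<in>X. eval f x = 0}"

definition logDer :: "(complex^'n) set set \<Rightarrow> ('n::finite \<Rightarrow> 'n mpoly) set" where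
  "logDer Xs = {\<delta>. \<forall>f\<in>arr_ideal Xs. apply_vf \<delta> f \<in> arr_ideal Xs}"

definition central_equidim_arrangement :: "(complex^'n::finite) set set \<Rightarrow> bool" where
  "central_equidim_arrangement Xs \<longleftrightarrow> finite Xs \<and> (\<forall>X\<in>Xs. vec.subspace X)
     \<and> (\<exists>d. \<forall>X\<in>Xs. vec.dim X = d)"

text \<open>Intersection lattice; the empty intersection is V = UNIV.\<close>
definition int_lattice :: "(complex^'n::finite) set set \<Rightarrow> (complex^'n) set set" where
  "int_lattice Xs = {\<Inter> J | J. J \<subseteq> Xs}"

definition forms :: "nat \<Rightarrow> ('n::finite \<Rightarrow> 'n mpoly) set" where
  "forms p = {\<eta>. \<forall>i. homogeneous p (\<eta> i)}"

text \<open>The pullback r_{V,X}(eta) vanishes at x in X iff the covector sum_i eta_i(x) dx_i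
  is zero on the tangent space X.\<close>
definition restr_vanishes_at :: "('n \<Rightarrow> 'n mpoly) \<Rightarrow> (complex^'n) set \<Rightarrow> complex^'n::finite \<Rightarrow> bool" where
  "restr_vanishes_at \<eta> X x \<longleftrightarrow> (\<forall>v\<in>X. (\<Sum>i\<in>UNIV. eval (\<eta> i) x * v $ i) = 0)"

definition Np :: "(complex^'n) set set \<Rightarrow> nat \<Rightarrow> ('n::finite \<Rightarrow> 'n mpoly) set" where
  "Np Xs p = {\<eta>\<in>forms p. \<forall>X\<in>int_lattice Xs. vec.dim X > 0 \<longrightarrow>
      (\<forall>x\<in>X. restr_vanishes_at \<eta> X x \<longrightarrow> x = 0)}"

end

theory Submission
  imports Defs "HOL-Computational_Algebra.Fundamental_Theorem_Algebra"
begin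

definition mmono :: "('n::finite \<Rightarrow>\<^sub>0 nat) \<Rightarrow> complex^'n \<Rightarrow> complex" where
  "mmono m x = (\<Prod>i\<in>UNIV. (x $ i) ^ Poly_Mapping.lookup m i)"

definition cst :: "complex \<Rightarrow> 'n::finite mpoly" where
  "cst c = Poly_Mapping.single 0 c"

definition var :: "'n \<Rightarrow> 'n::finite mpoly" where
  "var i = Poly_Mapping.single (Poly_Mapping.single i 1) 1"

lemma mono_add: "mmono (m + n) x = mmono m x * mmono n x"
  by (simp add: mmono_def lookup_add power_add prod.distrib)

lemma mono_zero[simp]: "mmono 0 x = 1"
  by (simp add: mmono_def)

lemma eval_superset:
  assumes "finite K" "Poly_Mapping.keys f \<subseteq> K"
  shows "eval f x = (\<Sum>m\<in>K. Poly_Mapping.lookup f m * mmono m x)"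
  unfolding eval_def mmono_def
  by (rule sum.mono_neutral_left[OF assms]) (auto simp: in_keys_iff)

lemma eval_zero[simp]: "eval 0 x = 0"
  by (simp add: eval_def)

lemma eval_add: "eval (f + g) x = eval f x + eval g x"
proof -
  let ?K = "Poly_Mapping.keys f \<union> Poly_Mapping.keys g"
  have "Poly_Mapping.keys (f+g) \<subseteq> ?K" by (simp add: keys_add)
  then have "eval (f+g) x = (\<Sum>m\<in>?K. Poly_Mapping.lookup (f+g) m * mmono m x)"
    by (intro eval_superset) auto
  also have "\<dots> = (\<Sum>m\<in>?K. Poly_Mapping.lookup f m * mmono m x) + (\<Sum>m\<in>?K. Poly_Mapping.lookup g m * mmono m x)"
    by (simp add: lookup_add distrib_right sum.distrib)
  also have "\<dots> = eval f x + eval g x"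
    by (subst (1 2) eval_superset[of ?K]) auto
  finally show ?thesis .
qed

lemma eval_uminus: "eval (- f) x = - eval f x"
  by (simp add: eval_def keys_minus sum_negf)

lemma eval_diff: "eval (f - g) x = eval f x - eval g x"
  using eval_add[of f "-g" x] by (simp add: eval_uminus)

lemma eval_sum: "eval (sum F A) x = (\<Sum>a\<in>A. eval (F a) x)"
  by (induction A rule: infinite_finite_induct) (auto simp: eval_add)

lemma eval_single: "eval (Poly_Mapping.single m c) x = c * mmono m x"
  by (subst eval_superset[of "{m}"]) auto

lemma poly_expand: "f = (\<Sum>m\<in>Poly_Mapping.keys f. Poly_Mapping.single m (Poly_Mapping.lookup f m))"
  by (rule poly_mapping_eqI) (simp add: lookup_sum lookup_single when_def in_keys_iff sum.delta' split: if_splits)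

lemma eval_mult: "eval (f * g) x = eval f x * eval g x"
proof -
  have "f * g = (\<Sum>m\<in>Poly_Mapping.keys f. Poly_Mapping.single m (Poly_Mapping.lookup f m)) *
     (\<Sum>n\<in>Poly_Mapping.keys g. Poly_Mapping.single n (Poly_Mapping.lookup g n))"
    using poly_expand[of f] poly_expand[of g] by simp
  also have "\<dots> = (\<Sum>m\<in>Poly_Mapping.keys f. \<Sum>n\<in>Poly_Mapping.keys g.
      Poly_Mapping.single (m+n) (Poly_Mapping.lookup f m * Poly_Mapping.lookup g n))"
    by (simp add: sum_product mult_single)
  finally have "eval (f*g) x = (\<Sum>m\<in>Poly_Mapping.keys f. \<Sum>n\<in>Poly_Mapping.keys g.
      (Poly_Mapping.lookup f m * mmono m x) * (Poly_Mapping.lookup g n * mmono n x))"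
    by (simp add: eval_sum eval_single mono_add mult_ac)
  also have "\<dots> = eval f x * eval g x"
    using eval_superset[OF finite_keys subset_refl, of f x] eval_superset[OF finite_keys subset_refl, of g x]
    by (simp add: sum_product)
  finally show ?thesis .
qed

lemma eval_one[simp]: "eval 1 x = 1"
  by (simp add: eval_def)

lemma eval_power: "eval (f ^ k) x = eval f x ^ k"
  by (induction k) (auto simp: eval_mult)

lemma eval_prod: "eval (prod F A) x = (\<Prod>a\<in>A. eval (F a) x)"
  by (induction A rule: infinite_finite_induct) (auto simp: eval_mult)

lemma eval_cst[simp]: "eval (cst c) x = c"
  by (simp add: cst_def eval_single)

lemma eval_var[simp]: "eval (var i) x = x $ i"
proof -
  have "mmono (Poly_Mapping.single i 1) x = (\<Prod>j\<in>UNIV. if j = i then x $ i else 1)"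
    unfolding mmono_def by (intro prod.cong) (auto simp: lookup_single)
  then show ?thesis by (simp add: var_def eval_single)
qed

lemma cst_mult: "cst (a*b) = cst a * cst b"
  by (simp add: cst_def mult_single)
lemma cst_add: "cst (a+b) = cst a + cst b"
  by (simp add: cst_def single_add)
lemma cst_diff: "cst (a-b) = cst a - cst b"
  by (simp add: cst_def single_diff)
lemma cst_one[simp]: "cst 1 = 1"
  by (simp add: cst_def)
lemma cst_zero[simp]: "cst 0 = 0"
  by (simp add: cst_def)

lemma eval_at_zero: "eval f 0 = Poly_Mapping.lookup f 0"
proof -
  have "mmono m 0 = (if m = 0 then 1 else 0)" for m :: "'a \<Rightarrow>\<^sub>0 nat"
  proof (cases "m = 0")
    case False
    then obtain i where "Poly_Mapping.lookup m i \<noteq> 0"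
      by (metis lookup_zero poly_mapping_eqI)
    then show ?thesis using False unfolding mmono_def
      by (auto intro!: prod_zero)
  qed simp
  then have "eval f 0 = (\<Sum>m\<in>insert 0 (Poly_Mapping.keys f). Poly_Mapping.lookup f m * (if m = 0 then 1 else 0))"
    by (subst eval_superset[of "insert 0 (Poly_Mapping.keys f)"]) auto
  also have "\<dots> = (\<Sum>m\<in>insert 0 (Poly_Mapping.keys f). if m = 0 then Poly_Mapping.lookup f m else 0)"
    by (intro sum.cong) auto
  also have "\<dots> = Poly_Mapping.lookup f 0" by (subst sum.delta) auto
  finally show ?thesis .
qed

lemma var_power: "var i ^ n = Poly_Mapping.single (Poly_Mapping.single i n) 1"
  by (induction n) (auto simp: var_def mult_single single_add[symmetric])

lemma single_prod:
  "(\<Prod>i\<in>A. Poly_Mapping.single (k i) (a i)) = Poly_Mapping.single (\<Sum>i\<in>A. k i) (\<Prod>i\<in>A. a i :: complex)"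
  by (induction A rule: infinite_finite_induct) (auto simp: mult_single)

lemma single_as_vars:
  "Poly_Mapping.single m c = cst c * (\<Prod>i\<in>UNIV. var i ^ Poly_Mapping.lookup m i)"
proof -
  have "(\<Sum>i\<in>UNIV. Poly_Mapping.single i (Poly_Mapping.lookup m i)) = m"
    by (rule poly_mapping_eqI) (simp add: lookup_sum lookup_single when_def)
  then show ?thesis
    by (simp add: var_power single_prod cst_def mult_single)
qed



definition is_ideal :: "'n::finite mpoly set \<Rightarrow> bool" where
  "is_ideal I \<longleftrightarrow> 0 \<in> I \<and> (\<forall>a\<in>I. \<forall>b\<in>I. a + b \<in> I) \<and> (\<forall>a\<in>I. \<forall>r. r * a \<in> I)"

lemma ideal_0: "is_ideal I \<Longrightarrow> 0 \<in> I" by (simp add: is_ideal_def)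
lemma ideal_add: "is_ideal I \<Longrightarrow> a \<in> I \<Longrightarrow> b \<in> I \<Longrightarrow> a + b \<in> I" by (simp add: is_ideal_def)
lemma ideal_mult: "is_ideal I \<Longrightarrow> a \<in> I \<Longrightarrow> r * a \<in> I" by (simp add: is_ideal_def)
lemma ideal_mult2: "is_ideal I \<Longrightarrow> a \<in> I \<Longrightarrow> a * r \<in> I" by (metis ideal_mult mult.commute)
lemma ideal_uminus: "is_ideal I \<Longrightarrow> a \<in> I \<Longrightarrow> - a \<in> I"
  using ideal_mult[of I a "-1"] by simp
lemma ideal_diff: "is_ideal I \<Longrightarrow> a \<in> I \<Longrightarrow> b \<in> I \<Longrightarrow> a - b \<in> I"
  using ideal_add[of I a "-b"] ideal_uminus[of I b] by simp
lemma ideal_sum: "is_ideal I \<Longrightarrow> (\<And>x. x \<in> A \<Longrightarrow> F x \<in> I) \<Longrightarrow> sum F A \<in> I"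
  by (induction A rule: infinite_finite_induct) (auto simp: ideal_0 ideal_add)

lemma ideal_gen_ideal: "is_ideal (ideal_gen G)"
  unfolding is_ideal_def
proof (intro conjI ballI allI)
  show "0 \<in> ideal_gen G" unfolding ideal_gen_def by (rule CollectI, rule exI[of _ "{}"]) auto
next
  fix a b assume "a \<in> ideal_gen G" "b \<in> ideal_gen G"
  then obtain F c F' c' where F: "finite F" "F \<subseteq> G" "a = (\<Sum>g\<in>F. c g * g)"
     and F': "finite F'" "F' \<subseteq> G" "b = (\<Sum>g\<in>F'. c' g * g)"
    unfolding ideal_gen_def by blast
  define d where "d g = (if g \<in> F then c g else 0) + (if g \<in> F' then c' g else 0)" for g
  have "(\<Sum>g\<in>F. c g * g) = (\<Sum>g\<in>F \<union> F'. (if g \<in> F then c g else 0) * g)"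
    using F F' by (intro sum.mono_neutral_cong_left) auto
  moreover have "(\<Sum>g\<in>F'. c' g * g) = (\<Sum>g\<in>F \<union> F'. (if g \<in> F' then c' g else 0) * g)"
    using F F' by (intro sum.mono_neutral_cong_left) auto
  ultimately have "a = (\<Sum>g\<in>F \<union> F'. (if g \<in> F then c g else 0) * g)"
     "b = (\<Sum>g\<in>F \<union> F'. (if g \<in> F' then c' g else 0) * g)" using F F' by simp_all
  then have "a + b = (\<Sum>g\<in>F \<union> F'. d g * g)"
    by (simp add: d_def sum.distrib distrib_right)
  then show "a + b \<in> ideal_gen G" unfolding ideal_gen_def using F F'
    by (intro CollectI exI[of _ "F \<union> F'"] exI[of _ d]) auto
next
  fix a r assume "a \<in> ideal_gen G"
  then obtain F c where F: "finite F" "F \<subseteq> G" "a = (\<Sum>g\<in>F. c g * g)"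
    unfolding ideal_gen_def by blast
  then have "r * a = (\<Sum>g\<in>F. (r * c g) * g)" by (simp add: sum_distrib_left mult.assoc)
  then show "r * a \<in> ideal_gen G" unfolding ideal_gen_def using F
    by (intro CollectI exI[of _ F] exI[of _ "\<lambda>g. r * c g"]) auto
qed

lemma ideal_gen_base: "g \<in> G \<Longrightarrow> g \<in> ideal_gen G"
  unfolding ideal_gen_def by (rule CollectI, rule exI[of _ "{g}"], rule exI[of _ "\<lambda>_. 1"]) auto

lemma cst_sum: "cst (sum f A) = (\<Sum>a\<in>A. cst (f a))"
  by (induction A rule: infinite_finite_induct) (auto simp: cst_add)
lemma cst_prod: "cst (prod f A) = (\<Prod>a\<in>A. cst (f a))"
  by (induction A rule: infinite_finite_induct) (auto simp: cst_mult)
lemma cst_power: "cst (a ^ n) = cst a ^ n"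
  by (induction n) (auto simp: cst_mult)
lemma cst_uminus: "cst (- a) = - cst a"
  by (simp add: cst_def single_uminus)
lemma cst_inj: "cst a = cst b \<Longrightarrow> a = b"
  by (metis cst_def lookup_single_eq)

lemma cong_eval:
  assumes P: "is_ideal P" and V: "\<And>i. var i - cst (c $ i) \<in> P"
  shows "g - cst (eval g c) \<in> P"
proof -
  define Q where "Q g \<longleftrightarrow> g - cst (eval g c) \<in> P" for g :: "'a mpoly"
  have Qadd: "Q (a + b)" if "Q a" "Q b" for a b
  proof -
    have "a + b - cst (eval (a+b) c) = (a - cst (eval a c)) + (b - cst (eval b c))"
      by (simp add: eval_add cst_add algebra_simps)
    then show ?thesis using that P unfolding Q_def by (metis ideal_add)
  qed
  have Qmult: "Q (a * b)" if "Q a" "Q b" for a b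
  proof -
    have "a * b - cst (eval (a*b) c) = a * (b - cst (eval b c)) + (a - cst (eval a c)) * cst (eval b c)"
      by (simp add: eval_mult cst_mult algebra_simps)
    then show ?thesis using that P unfolding Q_def by (metis ideal_add ideal_mult ideal_mult2)
  qed
  have Qcst: "Q (cst v)" for v unfolding Q_def using P by (simp add: ideal_0)
  have Qsum: "Q (sum F A)" if "\<And>x. x \<in> A \<Longrightarrow> Q (F x)" for F and A :: "'b set"
    using that by (induction A rule: infinite_finite_induct) (auto intro: Qadd simp: Qcst[of 0, simplified])
  have Qprod: "Q (prod F A)" if "\<And>x. x \<in> A \<Longrightarrow> Q (F x)" for F and A :: "'b set"
    using that by (induction A rule: infinite_finite_induct) (auto intro: Qmult simp: Qcst[of 1, simplified])
  have Qpow: "Q (a ^ n)" if "Q a" for a n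
    using that by (induction n) (auto intro: Qmult simp: Qcst[of 1, simplified])
  have Qvar: "Q (var i)" for i using V unfolding Q_def by simp
  have "Q g"
    apply (subst poly_expand)
    apply (rule Qsum)
    apply (subst single_as_vars)
    apply (rule Qmult[OF Qcst])
    apply (rule Qprod)
    apply (rule Qpow[OF Qvar])
    done
  then show ?thesis unfolding Q_def .
qed


abbreviation mp :: "complex poly \<Rightarrow> 'n::finite mpoly poly" where
  "mp p \<equiv> map_poly cst p"

lemma coeff_mp: "coeff (mp p) n = cst (coeff p n)"
  by (rule coeff_map_poly) simp

lemma mp_mult: "mp (p * q) = mp p * mp q"
  by (rule poly_eqI) (simp add: coeff_mp coeff_mult cst_sum cst_mult)

lemma mp_add: "mp (p + q) = mp p + mp q"
  by (rule poly_eqI) (simp add: coeff_mp cst_add)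

lemma mp_sum: "mp (sum f A) = (\<Sum>a\<in>A. mp (f a))"
  by (induction A rule: infinite_finite_induct) (auto simp: mp_add)

lemma mp_prod: "mp (prod f A) = (\<Prod>a\<in>A. mp (f a))"
  by (induction A rule: infinite_finite_induct) (auto simp: mp_mult)

lemma mp_const: "mp [:a:] = [:cst a:]"
  by (rule poly_eqI) (simp add: coeff_mp coeff_pCons split: nat.splits)

lemma mp_lin: "mp [:a, b:] = [:cst a, cst b:]"
  by (rule poly_eqI) (simp add: coeff_mp coeff_pCons split: nat.splits)

definition primelike :: "'n::finite mpoly set \<Rightarrow> bool" where
  "primelike P \<longleftrightarrow> is_ideal P \<and> 1 \<notin> P \<and> (\<forall>a b. a * b \<in> P \<longrightarrow> a \<in> P \<or> b \<in> P)"

lemma cst_notin: "primelike P \<Longrightarrow> a \<noteq> 0 \<Longrightarrow> cst a \<notin> P"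
proof
  assume "primelike P" "a \<noteq> 0" "cst a \<in> P"
  then have "cst (1/a) * cst a \<in> P" by (simp add: primelike_def ideal_mult)
  then have "1 \<in> P" using \<open>a \<noteq> 0\<close> by (simp add: cst_mult[symmetric])
  then show False using \<open>primelike P\<close> by (simp add: primelike_def)
qed

lemma root_in_prime:
  assumes P: "primelike P" and "q \<noteq> 0" and "poly (mp q) t \<in> P"
  shows "\<exists>r. t - cst r \<in> P"
  using assms(2,3)
proof (induction "degree q" arbitrary: q rule: less_induct)
  case less
  show ?case
  proof (cases "degree q = 0")
    case True
    then obtain a where "q = [:a:]" by (metis degree_eq_zeroE)
    with less.prems have "a \<noteq> 0" "cst a \<in> P" by (auto simp: mp_const)
    with cst_notin[OF P] show ?thesis by blast
  next
    case False
    then have "\<not> constant (poly q)" by (simp add: constant_degree)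
    then obtain r where "poly q r = 0" using fundamental_theorem_of_algebra by blast
    then have "[:-r, 1:] dvd q" by (simp add: dvd_iff_poly_eq_0)
    then obtain q' where q': "q = [:-r, 1:] * q'" by (auto elim: dvdE)
    with less.prems have "q' \<noteq> 0" by auto
    have "degree q = degree [:-r, 1:] + degree q'" unfolding q'
      by (rule degree_mult_eq) (use \<open>q' \<noteq> 0\<close> in auto)
    then have dq: "degree q = Suc (degree q')" by simp
    have "poly (mp q) t = (t - cst r) * poly (mp q') t"
      unfolding q' by (simp only: mp_mult mp_lin poly_mult) (simp add: cst_uminus)
    with less.prems P have "t - cst r \<in> P \<or> poly (mp q') t \<in> P"
      unfolding primelike_def by metis
    then show ?thesis
    proof
      assume "poly (mp q') t \<in> P"
      then show ?thesis using less.hyps[of q'] dq \<open>q' \<noteq> 0\<close> by auto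
    qed blast
  qed
qed


lemma lin_dep:
  fixes v :: "'j \<Rightarrow> 'k \<Rightarrow> complex"
  assumes "finite B" "finite J" "card J > card B"
  shows "\<exists>l. (\<exists>j\<in>J. l j \<noteq> 0) \<and> (\<forall>b\<in>B. (\<Sum>j\<in>J. l j * v j b) = 0)"
  using assms
proof (induction B arbitrary: J v rule: finite_induct)
  case empty
  then have "J \<noteq> {}" by auto
  then show ?case by (intro exI[of _ "\<lambda>_. 1"]) auto
next
  case (insert b B)
  show ?case
  proof (cases "\<forall>j\<in>J. v j b = 0")
    case True
    from insert.IH[of J v] insert.prems insert.hyps obtain l where
      "\<exists>j\<in>J. l j \<noteq> 0" "\<forall>b\<in>B. (\<Sum>j\<in>J. l j * v j b) = 0" by auto
    then show ?thesis using True by (intro exI[of _ l]) auto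
  next
    case False
    then obtain j0 where j0: "j0 \<in> J" "v j0 b \<noteq> 0" by auto
    define J' where "J' = J - {j0}"
    define w where "w j k = v j k - (v j b / v j0 b) * v j0 k" for j k
    have cJ': "card J' > card B" "finite J'"
      using insert.prems insert.hyps j0 by (auto simp: J'_def)
    from insert.IH[OF cJ'(2) cJ'(1), of w] obtain m where
      m: "\<exists>j\<in>J'. m j \<noteq> 0" "\<forall>k\<in>B. (\<Sum>j\<in>J'. m j * w j k) = 0" by auto
    define l where "l j = (if j = j0 then - (\<Sum>j\<in>J'. m j * v j b) / v j0 b else m j)" for j
    have key: "(\<Sum>j\<in>J. l j * v j k) = (\<Sum>j\<in>J'. m j * w j k)" for k
    proof -
      have "(\<Sum>j\<in>J. l j * v j k) = l j0 * v j0 k + (\<Sum>j\<in>J'. l j * v j k)"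
        using sum.remove[OF insert.prems(1) j0(1)] by (simp add: J'_def)
      also have "(\<Sum>j\<in>J'. l j * v j k) = (\<Sum>j\<in>J'. m j * v j k)"
        by (intro sum.cong) (auto simp: l_def J'_def)
      also have "(\<Sum>j\<in>J'. m j * w j k) = (\<Sum>j\<in>J'. m j * v j k) - (\<Sum>j\<in>J'. m j * v j b) / v j0 b * v j0 k"
        by (simp add: w_def right_diff_distrib sum_subtractf sum_divide_distrib sum_distrib_left sum_distrib_right mult_ac)
      ultimately show ?thesis by (simp add: l_def)
    qed
    have wb: "w j b = 0" for j using j0 by (simp add: w_def)
    show ?thesis
    proof (intro exI[of _ l] conjI ballI)
      from m(1) obtain j where "j \<in> J'" "m j \<noteq> 0" by auto
      then show "\<exists>j\<in>J. l j \<noteq> 0" by (intro bexI[of _ j]) (auto simp: l_def J'_def)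
    next
      fix k assume "k \<in> insert b B"
      then show "(\<Sum>j\<in>J. l j * v j k) = 0" using m(2) by (auto simp: key wb)
    qed
  qed
qed



lemma lookup_cst_mult: "Poly_Mapping.lookup (cst a * f) m = a * Poly_Mapping.lookup f m"
  by (simp add: cst_def mult_map_scale_conv_mult[symmetric] map.rep_eq when_def)

lemma mp_smult: "mp (smult a p) = smult (cst a) (mp p)"
  by (rule poly_eqI) (simp add: coeff_mp cst_mult)

lemma finite_bounded_monos: "finite {m :: 'n::finite \<Rightarrow>\<^sub>0 nat. mdeg m \<le> d}"
proof -
  have sub: "Poly_Mapping.lookup ` {m :: 'n \<Rightarrow>\<^sub>0 nat. mdeg m \<le> d} \<subseteq> PiE UNIV (\<lambda>_. {..d})"
  proof
    fix g assume "g \<in> Poly_Mapping.lookup ` {m :: 'n \<Rightarrow>\<^sub>0 nat. mdeg m \<le> d}"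
    then obtain m where m: "g = Poly_Mapping.lookup m" "mdeg m \<le> d" by auto
    have "Poly_Mapping.lookup m i \<le> d" for i
    proof -
      have "Poly_Mapping.lookup m i \<le> (\<Sum>j\<in>UNIV. Poly_Mapping.lookup m j)"
        by (rule member_le_sum) auto
      then show ?thesis using m(2) by (simp add: mdeg_def)
    qed
    then show "g \<in> PiE UNIV (\<lambda>_. {..d})" using m by auto
  qed
  have "finite (PiE (UNIV::'n set) (\<lambda>_. {..d}))" by (rule finite_PiE) auto
  then have "finite (Poly_Mapping.lookup ` {m :: 'n \<Rightarrow>\<^sub>0 nat. mdeg m \<le> d})"
    using sub finite_subset by blast
  moreover have "inj_on Poly_Mapping.lookup {m :: 'n \<Rightarrow>\<^sub>0 nat. mdeg m \<le> d}"
    by (auto simp: inj_on_def poly_mapping_eqI)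
  ultimately show ?thesis using finite_imageD by blast
qed

lemma nullstellensatz:
  fixes I :: "'n::finite mpoly set"
  assumes I: "is_ideal I" and nr: "\<forall>k. f ^ k \<notin> I"
  shows "\<exists>c. (\<forall>g\<in>I. eval g c = 0) \<and> eval f c \<noteq> 0"
proof -
  define A where "A = {J. is_ideal J \<and> I \<subseteq> J \<and> (\<forall>k. f ^ k \<notin> J)}"
  have IA: "I \<in> A" using I nr by (simp add: A_def)
  have "\<exists>M\<in>A. \<forall>X\<in>A. M \<subseteq> X \<longrightarrow> X = M"
  proof (rule Zorn_Lemma2, intro ballI)
    fix C assume C: "C \<in> chains A"
    show "\<exists>U\<in>A. \<forall>X\<in>C. X \<subseteq> U"
    proof (cases "C = {}")
      case True then show ?thesis using IA by auto
    next
      case False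
      have CA: "C \<subseteq> A" using chainsD2[OF C] .
      have "is_ideal (\<Union>C)"
        unfolding is_ideal_def
      proof (intro conjI ballI allI)
        from False obtain J where "J \<in> C" by auto
        then show "0 \<in> \<Union>C" using CA by (metis (no_types, lifting) A_def UnionI ideal_0 mem_Collect_eq subsetD)
      next
        fix a b assume "a \<in> \<Union>C" "b \<in> \<Union>C"
        then obtain J1 J2 where J: "J1 \<in> C" "J2 \<in> C" "a \<in> J1" "b \<in> J2" by auto
        from chainsD[OF C J(1,2)] show "a + b \<in> \<Union>C"
        proof
          assume "J1 \<subseteq> J2" then show ?thesis using J CA by (auto simp: A_def intro!: ideal_add)
        next
          assume "J2 \<subseteq> J1" then show ?thesis using J CA by (auto simp: A_def intro!: ideal_add)
        qed
      next
        fix a r assume "a \<in> \<Union>C"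
        then show "r * a \<in> \<Union>C" using CA by (auto simp: A_def intro: ideal_mult)
      qed
      moreover have "I \<subseteq> \<Union>C" using False CA by (auto simp: A_def)
      moreover have "\<forall>k. f ^ k \<notin> \<Union>C" using CA by (auto simp: A_def)
      ultimately show ?thesis by (intro bexI[of _ "\<Union>C"]) (auto simp: A_def)
    qed
  qed
  then obtain P where PA: "P \<in> A" and Pmax: "\<And>X. X \<in> A \<Longrightarrow> P \<subseteq> X \<Longrightarrow> X = P" by blast
  have P: "is_ideal P" "I \<subseteq> P" "\<And>k. f ^ k \<notin> P" using PA by (auto simp: A_def)
  have ext: "\<exists>k r. f ^ k - r * g \<in> P" if "g \<notin> P" for g
  proof -
    define J where "J = {p + r * g | p r. p \<in> P}"
    have "is_ideal J"
      unfolding is_ideal_def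
    proof (intro conjI ballI allI)
      show "0 \<in> J" unfolding J_def using P(1) by (auto intro!: exI[of _ 0] simp: ideal_0)
    next
      fix a b assume "a \<in> J" "b \<in> J"
      then obtain p1 r1 p2 r2 where "a = p1 + r1 * g" "b = p2 + r2 * g" "p1 \<in> P" "p2 \<in> P"
        unfolding J_def by auto
      then show "a + b \<in> J" unfolding J_def using P(1)
        by (intro CollectI exI[of _ "p1 + p2"] exI[of _ "r1 + r2"]) (auto simp: ideal_add algebra_simps)
    next
      fix a s assume "a \<in> J"
      then obtain p1 r1 where "a = p1 + r1 * g" "p1 \<in> P" unfolding J_def by auto
      then have "s * a = s * p1 + (s * r1) * g" "s * p1 \<in> P" using ideal_mult[OF P(1)] by (auto simp: algebra_simps)
      then show "s * a \<in> J" unfolding J_def by blast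
    qed
    moreover have PJ: "P \<subseteq> J" unfolding J_def
    proof
      fix x assume "x \<in> P"
      then have "x = x + 0 * g \<and> x \<in> P" by simp
      then show "x \<in> {p + r * g | p r. p \<in> P}" by blast
    qed
    moreover have "g \<in> J"
    proof -
      have "g = 0 + 1 * g \<and> 0 \<in> P" using P(1) by (simp add: ideal_0)
      then show ?thesis unfolding J_def by blast
    qed
    ultimately have "J \<notin> A" using Pmax that by blast
    then obtain k where "f ^ k \<in> J" using \<open>is_ideal J\<close> PJ P(2) by (auto simp: A_def)
    then obtain p r where "f ^ k = p + r * g" "p \<in> P" unfolding J_def by auto
    then show ?thesis by (intro exI[of _ k] exI[of _ r]) simp
  qed
  have prime: "primelike P"
    unfolding primelike_def
  proof (intro conjI allI impI)
    show "is_ideal P" by (rule P(1))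
    show "1 \<notin> P" using P(3)[of 0] by simp
  next
    fix a b assume ab: "a * b \<in> P"
    show "a \<in> P \<or> b \<in> P"
    proof (rule ccontr)
      assume "\<not> (a \<in> P \<or> b \<in> P)"
      then obtain k1 r1 k2 r2 where 1: "f ^ k1 - r1 * a \<in> P" and 2: "f ^ k2 - r2 * b \<in> P"
        using ext by blast
      have "f ^ (k1 + k2) = (f ^ k1 - r1 * a) * f ^ k2 + (r1 * a) * (f ^ k2 - r2 * b) + (r1 * r2) * (a * b)"
        by (simp add: power_add algebra_simps)
      also have "\<dots> \<in> P"
        by (intro ideal_add[OF P(1)] ideal_mult2[OF P(1) 1] ideal_mult[OF P(1) 2] ideal_mult[OF P(1) ab])
      finally show False using P(3) by blast
    qed
  qed
  have varc: "\<exists>c. var i - cst c \<in> P" for i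
  proof (rule ccontr)
    assume nv: "\<nexists>c. var i - cst c \<in> P"
    define t where "t = var i"
    have "\<forall>c. \<exists>k r. f ^ k - r * (t - cst c) \<in> P" using ext nv unfolding t_def by blast
    then obtain k r where kr: "\<And>c. f ^ k c - r c * (t - cst c) \<in> P" by metis
    define dg where "dg q = Max (insert 0 (mdeg ` Poly_Mapping.keys q))" for q :: "'n mpoly"
    have "\<exists>kd. infinite {c. (k c, dg (r c)) = kd}"
    proof (rule ccontr)
      assume "\<not> ?thesis"
      then have "\<forall>kd. countable {c. (k c, dg (r c)) = kd}" by (auto intro: countable_finite)
      then have "countable (\<Union>kd\<in>(UNIV :: (nat \<times> nat) set). {c. (k c, dg (r c)) = kd})"
        by (intro countable_UN) auto
      moreover have "(\<Union>kd\<in>(UNIV :: (nat \<times> nat) set). {c. (k c, dg (r c)) = kd}) = UNIV" by auto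
      ultimately show False using uncountable_UNIV_complex by simp
    qed
    then obtain k0 d0 where Sinf: "infinite {c. k c = k0 \<and> dg (r c) = d0}" by auto
    define S where "S = {c. k c = k0 \<and> dg (r c) = d0}"
    define B where "B = {m :: 'n \<Rightarrow>\<^sub>0 nat. mdeg m \<le> d0}"
    have finB: "finite B" unfolding B_def by (rule finite_bounded_monos)
    have keysB: "Poly_Mapping.keys (r c) \<subseteq> B" if "c \<in> S" for c
    proof
      fix m assume "m \<in> Poly_Mapping.keys (r c)"
      then have "mdeg m \<le> dg (r c)" unfolding dg_def by (intro Max_ge) auto
      then show "m \<in> B" using that by (simp add: B_def S_def)
    qed
    obtain J where J: "finite J" "card J = Suc (card B)" "J \<subseteq> S"
      using infinite_arbitrarily_large[OF Sinf[folded S_def]] by blast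
    obtain l where l: "\<exists>c\<in>J. l c \<noteq> 0" "\<forall>m\<in>B. (\<Sum>c\<in>J. l c * Poly_Mapping.lookup (r c) m) = 0"
      using lin_dep[OF finB J(1), of "\<lambda>c m. Poly_Mapping.lookup (r c) m"] J(2) by auto
    have lin0: "(\<Sum>c\<in>J. cst (l c) * r c) = 0"
    proof (rule poly_mapping_eqI)
      fix m
      show "Poly_Mapping.lookup (\<Sum>c\<in>J. cst (l c) * r c) m = Poly_Mapping.lookup 0 m"
      proof (cases "m \<in> B")
        case True then show ?thesis using l(2) by (simp add: lookup_sum lookup_cst_mult)
      next
        case False
        have "Poly_Mapping.lookup (r c) m = 0" if "c \<in> J" for c
        proof -
          have "c \<in> S" using that J(3) by auto
          then have "m \<notin> Poly_Mapping.keys (r c)" using keysB False by blast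
          then show ?thesis by (simp add: in_keys_iff)
        qed
        then show ?thesis by (simp add: lookup_sum lookup_cst_mult)
      qed
    qed
    define Q where "Q c = (\<Prod>c'\<in>J - {c}. t - cst c')" for c
    have QJ: "Q c * (t - cst c) = (\<Prod>c'\<in>J. t - cst c')" if "c \<in> J" for c
      unfolding Q_def using prod.remove[OF J(1) that, of "\<lambda>c'. t - cst c'"] by (simp add: mult.commute)
    have "(\<Sum>c\<in>J. cst (l c) * Q c * (r c * (t - cst c))) = (\<Sum>c\<in>J. (cst (l c) * r c) * (Q c * (t - cst c)))"
      by (intro sum.cong refl) (simp add: mult_ac)
    also have "\<dots> = (\<Sum>c\<in>J. (cst (l c) * r c) * (\<Prod>c'\<in>J. t - cst c'))"
      by (intro sum.cong refl) (simp add: QJ)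
    also have "\<dots> = (\<Sum>c\<in>J. cst (l c) * r c) * (\<Prod>c'\<in>J. t - cst c')"
      by (simp add: sum_distrib_right)
    also have "\<dots> = 0" using lin0 by simp
    finally have s0: "(\<Sum>c\<in>J. cst (l c) * Q c * (r c * (t - cst c))) = 0" .
    have "(\<Sum>c\<in>J. cst (l c) * Q c) * f ^ k0 =
        (\<Sum>c\<in>J. cst (l c) * Q c * (f ^ k0 - r c * (t - cst c)))"
      using s0 by (simp add: sum_distrib_right right_diff_distrib sum_subtractf)
    also have "\<dots> \<in> P"
      using kr J(3) P(1) by (intro ideal_sum ideal_mult) (auto simp: S_def)
    finally have "(\<Sum>c\<in>J. cst (l c) * Q c) \<in> P"
      using prime P(3)[of k0] unfolding primelike_def by blast
    moreover define qq where "qq = (\<Sum>c\<in>J. smult (l c) (\<Prod>c'\<in>J - {c}. [:- c', 1:]))"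
    moreover have "poly (mp qq) t = (\<Sum>c\<in>J. cst (l c) * Q c)"
      unfolding qq_def Q_def
      by (simp add: mp_sum mp_prod poly_sum poly_prod mp_smult mp_lin cst_uminus)
    moreover have "qq \<noteq> 0"
    proof
      assume "qq = 0"
      from l(1) obtain c0 where c0: "c0 \<in> J" "l c0 \<noteq> 0" by auto
      have "poly qq c0 = (\<Sum>c\<in>J. l c * (\<Prod>c'\<in>J - {c}. c0 - c'))"
        by (simp add: qq_def poly_sum poly_prod)
      also have "\<dots> = l c0 * (\<Prod>c'\<in>J - {c0}. c0 - c') + (\<Sum>c\<in>J - {c0}. l c * (\<Prod>c'\<in>J - {c}. c0 - c'))"
        using sum.remove[OF J(1) c0(1)] by simp
      also have "(\<Sum>c\<in>J - {c0}. l c * (\<Prod>c'\<in>J - {c}. c0 - c')) = 0"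
        using J(1) c0(1) by (intro sum.neutral ballI) (auto intro!: prod_zero bexI[of _ c0])
      finally have "poly qq c0 = l c0 * (\<Prod>c'\<in>J - {c0}. c0 - c')" by simp
      moreover have "(\<Prod>c'\<in>J - {c0}. c0 - c') \<noteq> 0" using J(1) by auto
      ultimately have "poly qq c0 \<noteq> 0" using c0(2) by simp
      with \<open>qq = 0\<close> show False by simp
    qed
    ultimately have "\<exists>r0. t - cst r0 \<in> P" using root_in_prime[OF prime, of qq t] by simp
    then obtain r0 where "t - cst r0 \<in> P" by blast
    with nv show False unfolding t_def by blast
  qed
  then obtain cc where cc: "\<And>i. var i - cst (cc i) \<in> P" by metis
  define c where "c = (\<chi> i. cc i)"
  have cg: "g - cst (eval g c) \<in> P" for g
    by (rule cong_eval[OF P(1)]) (simp add: c_def cc)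
  show ?thesis
  proof (intro exI[of _ c] conjI ballI)
    fix g assume "g \<in> I"
    then have "g \<in> P" using P(2) by auto
    then have "g - (g - cst (eval g c)) \<in> P" using ideal_diff[OF P(1) _ cg[of g]] by blast
    then have "cst (eval g c) \<in> P" by simp
    then show "eval g c = 0" using cst_notin[OF prime] by blast
  next
    show "eval f c \<noteq> 0"
    proof
      assume "eval f c = 0"
      then have "f \<in> P" using cg[of f] by simp
      then show False using P(3)[of 1] by simp
    qed
  qed
qed



lemma sep_poly:
  fixes Y :: "(complex^'n::finite) set"
  assumes Y: "vec.subspace Y" and x: "x \<notin> Y"
  shows "\<exists>h. (\<forall>y\<in>Y. eval h y = 0) \<and> eval h x \<noteq> 0"
proof -
  obtain B where B: "B \<subseteq> Y" "vec.independent B" "Y \<subseteq> vec.span B" "card B = vec.dim Y"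
    by (rule vec.basis_exists[of Y])
  have spanB: "vec.span B = Y" using vec.span_subspace[OF B(1) B(3) Y] .
  have xs: "x \<notin> vec.span B" using x spanB by simp
  have ind: "vec.independent (insert x B)"
    by (rule vec.independent_insertI[OF xs B(2)])
  define f where "f z = (if z = x then x else 0)" for z :: "complex^'n"
  from vec.linear_independent_extend[OF ind, of f]
  obtain g where g: "Vector_Spaces.linear (*s) (*s) g" "\<forall>z\<in>insert x B. g z = f z"
    by (elim exE conjE)
  have g0: "g y = 0" if "y \<in> Y" for y
  proof (rule vec.linear_eq_0_on_span[OF g(1)])
    show "y \<in> vec.span B" using that spanB by simp
  next
    fix z assume "z \<in> B"
    then have "z \<noteq> x" using x B(1) by auto
    then show "g z = 0" using g(2) \<open>z \<in> B\<close> by (simp add: f_def)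
  qed
  have gx: "g x = x" using g(2) by (simp add: f_def)
  have "0 \<in> Y" using Y by (rule vec.subspace_0)
  then have "x \<noteq> 0" using x by auto
  then obtain k where k: "x $ k \<noteq> 0" by (metis vec_eq_iff zero_index)
  define A where "A = matrix g"
  define h where "h = (\<Sum>j\<in>UNIV. cst (A $ k $ j) * var j)"
  have evh: "eval h z = g z $ k" for z
  proof -
    have "g z $ k = (A *v z) $ k" using matrix_works[OF g(1)] by (simp add: A_def)
    also have "\<dots> = (\<Sum>j\<in>UNIV. A $ k $ j * z $ j)" by (simp add: matrix_vector_mult_def)
    finally show ?thesis by (simp add: h_def eval_sum eval_mult)
  qed
  have "\<forall>y\<in>Y. eval h y = 0" by (simp add: evh g0)
  moreover have "eval h x \<noteq> 0" by (simp add: evh gx k)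
  ultimately show ?thesis by blast
qed

lemma eval_pder: "eval (pder i f) w = (\<Sum>m\<in>Poly_Mapping.keys f. Poly_Mapping.lookup f m * of_nat (Poly_Mapping.lookup m i) * mmono (m - Poly_Mapping.single i 1) w)"
  by (simp add: pder_def eval_sum eval_single)

lemma mmono_minus:
  "of_nat (Poly_Mapping.lookup m i) * mmono (m - Poly_Mapping.single i 1) w =
   of_nat (Poly_Mapping.lookup m i) * (w $ i ^ (Poly_Mapping.lookup m i - 1) * (\<Prod>j\<in>UNIV - {i}. w $ j ^ Poly_Mapping.lookup m j))"
proof -
  have "mmono (m - Poly_Mapping.single i 1) w = w $ i ^ (Poly_Mapping.lookup m i - 1) *
      (\<Prod>j\<in>UNIV - {i}. w $ j ^ Poly_Mapping.lookup (m - Poly_Mapping.single i 1) j)"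
    unfolding mmono_def by (subst prod.remove[of UNIV i]) (auto simp: lookup_minus)
  also have "(\<Prod>j\<in>UNIV - {i}. w $ j ^ Poly_Mapping.lookup (m - Poly_Mapping.single i 1) j) =
      (\<Prod>j\<in>UNIV - {i}. w $ j ^ Poly_Mapping.lookup m j)"
    by (intro prod.cong) (auto simp: lookup_minus lookup_single)
  finally show ?thesis by simp
qed

lemma eval_line_deriv:
  "((\<lambda>s. eval f (y + s *s v)) has_field_derivative (\<Sum>i\<in>UNIV. v $ i * eval (pder i f) (y + z *s v))) (at z)"
proof -
  define w where "w = y + z *s v"
  have fe: "(\<lambda>s. eval f (y + s *s v)) = (\<lambda>s. \<Sum>m\<in>Poly_Mapping.keys f. Poly_Mapping.lookup f m * (\<Prod>i\<in>UNIV. (y $ i + s * v $ i) ^ Poly_Mapping.lookup m i))"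
    by (simp add: eval_def)
  have each: "((\<lambda>s. \<Prod>i\<in>UNIV. (y $ i + s * v $ i) ^ Poly_Mapping.lookup m i) has_field_derivative
     (\<Sum>i\<in>UNIV. (of_nat (Poly_Mapping.lookup m i) * (v $ i * (y $ i + z * v $ i) ^ (Poly_Mapping.lookup m i - Suc 0))) *
        (\<Prod>j\<in>UNIV - {i}. (y $ j + z * v $ j) ^ Poly_Mapping.lookup m j))) (at z)" for m :: "'a \<Rightarrow>\<^sub>0 nat"
    by (rule has_field_derivative_prod) (auto intro!: derivative_eq_intros)
  have D: "((\<lambda>s. eval f (y + s *s v)) has_field_derivative
     (\<Sum>m\<in>Poly_Mapping.keys f. Poly_Mapping.lookup f m * (\<Sum>i\<in>UNIV. (of_nat (Poly_Mapping.lookup m i) * (v $ i * (y $ i + z * v $ i) ^ (Poly_Mapping.lookup m i - Suc 0))) *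
        (\<Prod>j\<in>UNIV - {i}. (y $ j + z * v $ j) ^ Poly_Mapping.lookup m j)))) (at z)"
    unfolding fe by (intro DERIV_sum DERIV_cmult each)
  have wi: "w $ i = y $ i + z * v $ i" for i by (simp add: w_def)
  have "(\<Sum>i\<in>UNIV. v $ i * eval (pder i f) w) =
     (\<Sum>i\<in>UNIV. \<Sum>m\<in>Poly_Mapping.keys f. v $ i * (Poly_Mapping.lookup f m * (of_nat (Poly_Mapping.lookup m i) * mmono (m - Poly_Mapping.single i 1) w)))"
    by (simp add: eval_pder sum_distrib_left mult.assoc)
  also have "\<dots> = (\<Sum>i\<in>UNIV. \<Sum>m\<in>Poly_Mapping.keys f. v $ i * (Poly_Mapping.lookup f m * (of_nat (Poly_Mapping.lookup m i) * (w $ i ^ (Poly_Mapping.lookup m i - 1) * (\<Prod>j\<in>UNIV - {i}. w $ j ^ Poly_Mapping.lookup m j)))))"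
    by (simp only: mmono_minus)
  also have "\<dots> = (\<Sum>m\<in>Poly_Mapping.keys f. Poly_Mapping.lookup f m * (\<Sum>i\<in>UNIV. (of_nat (Poly_Mapping.lookup m i) * (v $ i * (y $ i + z * v $ i) ^ (Poly_Mapping.lookup m i - Suc 0))) *
        (\<Prod>j\<in>UNIV - {i}. (y $ j + z * v $ j) ^ Poly_Mapping.lookup m j)))"
    by (subst sum.swap) (simp add: sum_distrib_left wi mult_ac)
  finally show ?thesis using D by (simp add: w_def)
qed

lemma deriv_vanish:
  assumes Y: "vec.subspace Y" and f: "\<forall>y\<in>Y. eval f y = 0" and y: "y \<in> Y" and v: "v \<in> Y"
  shows "(\<Sum>i\<in>UNIV. v $ i * eval (pder i f) y) = 0"
proof -
  have "((\<lambda>s. eval f (y + s *s v)) has_field_derivative (\<Sum>i\<in>UNIV. v $ i * eval (pder i f) (y + 0 *s v))) (at 0)"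
    by (rule eval_line_deriv)
  moreover have "(\<lambda>s. eval f (y + s *s v)) = (\<lambda>s. 0)"
    using f y v Y by (auto intro!: vec.subspace_add vec.subspace_scale)
  ultimately have "((\<lambda>s. 0::complex) has_field_derivative (\<Sum>i\<in>UNIV. v $ i * eval (pder i f) y)) (at 0)" by simp
  moreover have "((\<lambda>s. 0::complex) has_field_derivative 0) (at 0)" by (rule DERIV_const)
  ultimately show ?thesis using DERIV_unique by blast
qed

lemma zero_set:
  fixes Xs :: "(complex^'n::finite) set set" and \<eta> :: "'n \<Rightarrow> 'n mpoly"
  assumes A: "central_equidim_arrangement Xs" and eta: "\<eta> \<in> Np Xs p" and x: "x \<noteq> 0"
  shows "\<exists>\<delta>\<in>logDer Xs. eval (contract \<eta> \<delta>) x \<noteq> 0"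
proof -
  have fin: "finite Xs" and sub: "\<And>Y. Y \<in> Xs \<Longrightarrow> vec.subspace Y"
    using A by (auto simp: central_equidim_arrangement_def)
  define X where "X = \<Inter>{Y\<in>Xs. x \<in> Y}"
  have XL: "X \<in> int_lattice Xs" unfolding int_lattice_def X_def by blast
  have xX: "x \<in> X" unfolding X_def by auto
  have "vec.dim X \<noteq> 0"
  proof
    assume "vec.dim X = 0"
    then have "X \<subseteq> {0}" by simp
    with xX x show False by auto
  qed
  then have "vec.dim X > 0" by (simp only: gr0I)
  with eta XL xX x have "\<not> restr_vanishes_at \<eta> X x" unfolding Np_def by blast
  then obtain v where vX: "v \<in> X" and nz: "(\<Sum>i\<in>UNIV. eval (\<eta> i) x * v $ i) \<noteq> 0"
    unfolding restr_vanishes_at_def by blast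
  define N where "N = {Y\<in>Xs. x \<notin> Y}"
  have "\<forall>Y\<in>N. \<exists>h. (\<forall>y\<in>Y. eval h y = 0) \<and> eval h x \<noteq> 0"
    using sep_poly sub unfolding N_def by blast
  then obtain hY where hY: "\<And>Y. Y \<in> N \<Longrightarrow> (\<forall>y\<in>Y. eval (hY Y) y = 0) \<and> eval (hY Y) x \<noteq> 0"
    by metis
  define h where "h = (\<Prod>Y\<in>N. hY Y)"
  have finN: "finite N" using fin by (simp add: N_def)
  have hx: "eval h x \<noteq> 0" unfolding h_def eval_prod using finN hY by auto
  have hy: "eval h y = 0" if "Y \<in> N" "y \<in> Y" for Y y
    unfolding h_def eval_prod using finN hY that by (intro prod_zero) auto
  define \<delta> where "\<delta> i = h * cst (v $ i)" for i
  have ev_apply: "eval (apply_vf \<delta> g) y = eval h y * (\<Sum>i\<in>UNIV. v $ i * eval (pder i g) y)" for g y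
    by (simp add: apply_vf_def \<delta>_def eval_sum eval_mult sum_distrib_left mult_ac)
  have "\<delta> \<in> logDer Xs"
    unfolding logDer_def arr_ideal_def
  proof (intro CollectI ballI)
    fix g Y y assume g: "g \<in> {f. \<forall>X\<in>Xs. \<forall>x\<in>X. eval f x = 0}" and Y: "Y \<in> Xs" and y: "y \<in> Y"
    show "eval (apply_vf \<delta> g) y = 0"
    proof (cases "x \<in> Y")
      case True
      then have "X \<subseteq> Y" unfolding X_def using Y by auto
      then have "(\<Sum>i\<in>UNIV. v $ i * eval (pder i g) y) = 0"
        using deriv_vanish[OF sub[OF Y] _ y, where v=v and f=g] g Y vX by auto
      then show ?thesis by (simp add: ev_apply)
    next
      case False
      then show ?thesis using hy[of Y y] Y y by (simp add: ev_apply N_def)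
    qed
  qed
  moreover have "eval (contract \<eta> \<delta>) x = eval h x * (\<Sum>i\<in>UNIV. eval (\<eta> i) x * v $ i)"
    by (simp add: contract_def \<delta>_def eval_sum eval_mult sum_distrib_left mult_ac)
  ultimately show ?thesis using hx nz by (intro bexI[of _ \<delta>]) auto
qed

theorem lemma3p6:
  fixes Xs :: "(complex^'n::finite) set set" and p :: nat and \<eta> :: "'n \<Rightarrow> 'n mpoly"
  assumes "central_equidim_arrangement Xs"
    and "\<eta> \<in> Np Xs p"
  shows "irrelevant_ideal \<subseteq> radical (ideal_gen {contract \<eta> \<delta> | \<delta>. \<delta> \<in> logDer Xs})"
proof
  fix f :: "'n mpoly" assume f: "f \<in> irrelevant_ideal"
  define G where "G = {contract \<eta> \<delta> | \<delta>. \<delta> \<in> logDer Xs}"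
  show "f \<in> radical (ideal_gen {contract \<eta> \<delta> | \<delta>. \<delta> \<in> logDer Xs})"
  proof (rule ccontr)
    assume "f \<notin> radical (ideal_gen {contract \<eta> \<delta> | \<delta>. \<delta> \<in> logDer Xs})"
    then have "\<forall>k. f ^ k \<notin> ideal_gen G" unfolding radical_def G_def by blast
    then obtain c where c: "\<forall>g\<in>ideal_gen G. eval g c = 0" "eval f c \<noteq> 0"
      using nullstellensatz[OF ideal_gen_ideal] by blast
    have "c \<noteq> 0" using c(2) f by (auto simp: eval_at_zero irrelevant_ideal_def)
    then obtain \<delta> where "\<delta> \<in> logDer Xs" "eval (contract \<eta> \<delta>) c \<noteq> 0"
      using zero_set[OF assms \<open>c \<noteq> 0\<close>] by blast
    moreover have "contract \<eta> \<delta> \<in> ideal_gen G"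
      using \<open>\<delta> \<in> logDer Xs\<close> by (intro ideal_gen_base) (auto simp: G_def)
    ultimately show False using c(1) by blast
  qed
qed


end
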